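(* $\pi(e_{n,1}^{(n)})=\pi(z)$ and $\pi(f_{n,1}^{(n)})=\pi(H_0)$.
   Context: Let $\mathfrak g=Q(n)$ with even basis $e_{i,j}$, odd basis $f_{i,j}$, $z=\sum_ie_{i,i}$, $H_0=\sum_{i=1}^{n}(-1)^{i-1}f_{i,i}$. Let $\chi(x)=\mathrm{otr}(xE)$ with $E=\sum_{i=1}^{n-1}f_{i,i+1}$, $\mathfrak m$ spanned by $e_{i,j},f_{i,j}$ ($i>j$), $\chi(e_{i+1,i})=1$ and $\chi=0$ on the other basis vectors of $\mathfrak m$, $I_\chi$ the left ideal of $U(\mathfrak g)$ generated by $a-\chi(a)$ ($a\in\mathfrak m$), and $\pi:U(\mathfrak g)\to U(\mathfrak g)/I_\chi$ the projection. Sergeev's elements: $e_{i,j}^{(1)}=e_{i,j}$, $f_{i,j}^{(1)}=f_{i,j}$, $e_{i,j}^{(m)}=\sum_k e_{i,k}e_{k,j}^{(m-1)}+(-1)^{m+1}\sum_k f_{i,k}f_{k,j}^{(m-1)}$, $f_{i,j}^{(m)}=\sum_k e_{i,k}f_{k,j}^{(m-1)}+(-1)^{m+1}\sum_k f_{i,k}e_{k,j}^{(m-1)}$. *)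

theory Defs
  imports Complex_Main "HOL-Library.Function_Algebras"
begin

(* Generators of Q(n): E i j = e_{i,j} (even), F i j = f_{i,j} (odd). *)
datatype qgen = E nat nat | F nat nat

fun qodd :: "qgen \<Rightarrow> bool" where
  "qodd (E i j) = False" | "qodd (F i j) = True"

definition qbasis :: "nat \<Rightarrow> qgen set" where
  "qbasis n = {E i j | i j. 1 \<le> i \<and> i \<le> n \<and> 1 \<le> j \<and> j \<le> n}
            \<union> {F i j | i j. 1 \<le> i \<and> i \<le> n \<and> 1 \<le> j \<and> j \<le> n}"

(* Tensor algebra T(Q(n)) over C: noncommutative polynomials, represented as
   coefficient functions on words; addition/subtraction are pointwise
   (Function_Algebras), multiplication is concatenation-convolution tmul. *)
type_synonym talg = "qgen list \<Rightarrow> complex"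

definition tmul :: "talg \<Rightarrow> talg \<Rightarrow> talg" (infixl "\<otimes>" 70) where
  "p \<otimes> q = (\<lambda>w. \<Sum>k\<le>length w. p (take k w) * q (drop k w))"

definition tsc :: "complex \<Rightarrow> talg \<Rightarrow> talg" where
  "tsc c p = (\<lambda>w. c * p w)"

definition mono :: "qgen list \<Rightarrow> talg" where
  "mono u = (\<lambda>w. if w = u then 1 else 0)"

definition gen :: "qgen \<Rightarrow> talg" where
  "gen x = mono [x]"

fun qbr :: "qgen \<Rightarrow> qgen \<Rightarrow> talg" where
  "qbr (E i j) (E k l) = (if j = k then gen (E i l) else 0) - (if l = i then gen (E k j) else 0)"
| "qbr (E i j) (F k l) = (if j = k then gen (F i l) else 0) - (if l = i then gen (F k j) else 0)"
| "qbr (F i j) (E k l) = (if j = k then gen (F i l) else 0) - (if l = i then gen (F k j) else 0)"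
| "qbr (F i j) (F k l) = (if j = k then gen (E i l) else 0) + (if l = i then gen (E k j) else 0)"

definition qrel :: "qgen \<Rightarrow> qgen \<Rightarrow> talg" where
  "qrel x y = gen x \<otimes> gen y
     - tsc (if qodd x \<and> qodd y then -1 else 1) (gen y \<otimes> gen x) - qbr x y"

definition mbasis :: "nat \<Rightarrow> qgen set" where
  "mbasis n = {E i j | i j. 1 \<le> j \<and> j < i \<and> i \<le> n}
            \<union> {F i j | i j. 1 \<le> j \<and> j < i \<and> i \<le> n}"

fun chi :: "qgen \<Rightarrow> complex" where
  "chi (E i j) = (if i = j + 1 then 1 else 0)"
| "chi (F i j) = 0"

(* Preimage in T(Q(n)) of I_chi: the two-sided ideal of defining relations of
   U(Q(n)) plus the left ideal generated by a - chi(a), a in m. *)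
inductive_set kideal :: "nat \<Rightarrow> talg set" for n where
  zero: "0 \<in> kideal n"
| rel: "\<lbrakk>x \<in> qbasis n; y \<in> qbasis n; set u \<subseteq> qbasis n; set v \<subseteq> qbasis n\<rbrakk>
        \<Longrightarrow> mono u \<otimes> qrel x y \<otimes> mono v \<in> kideal n"
| lft: "\<lbrakk>a \<in> mbasis n; set u \<subseteq> qbasis n\<rbrakk>
        \<Longrightarrow> mono u \<otimes> (gen a - tsc (chi a) (mono [])) \<in> kideal n"
| add: "\<lbrakk>p \<in> kideal n; q \<in> kideal n\<rbrakk> \<Longrightarrow> p + q \<in> kideal n"
| smul: "p \<in> kideal n \<Longrightarrow> tsc c p \<in> kideal n"

(* pi(p) = pi(q) in U(g)/I_chi *)
definition pi_eq :: "nat \<Rightarrow> talg \<Rightarrow> talg \<Rightarrow> bool" where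
  "pi_eq n p q \<longleftrightarrow> p - q \<in> kideal n"

(* Sergeev's elements: ser n m x = x^{(m)}, sums over k = 1..n *)
fun ser :: "nat \<Rightarrow> nat \<Rightarrow> qgen \<Rightarrow> talg" where
  "ser n 0 x = 0"
| "ser n (Suc 0) x = gen x"
| "ser n (Suc (Suc m)) (E i j) =
     (\<Sum>k=1..n. gen (E i k) \<otimes> ser n (Suc m) (E k j))
     + tsc ((-1) ^ (Suc (Suc m) + 1)) (\<Sum>k=1..n. gen (F i k) \<otimes> ser n (Suc m) (F k j))"
| "ser n (Suc (Suc m)) (F i j) =
     (\<Sum>k=1..n. gen (E i k) \<otimes> ser n (Suc m) (F k j))
     + tsc ((-1) ^ (Suc (Suc m) + 1)) (\<Sum>k=1..n. gen (F i k) \<otimes> ser n (Suc m) (E k j))"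

definition zel :: "nat \<Rightarrow> talg" where
  "zel n = (\<Sum>i=1..n. gen (E i i))"

definition H0 :: "nat \<Rightarrow> talg" where
  "H0 n = (\<Sum>i=1..n. tsc ((-1) ^ (i - 1)) (gen (F i i)))"

end

theory Submission
  imports Defs
begin


lemma lam_plus[simp]: "(\<lambda>a. (p::talg) a + q a) = p + q" by (simp add: fun_eq_iff)
lemma lam_diff[simp]: "(\<lambda>a. (p::talg) a - q a) = p - q" by (simp add: fun_eq_iff)
lemma lam_neg[simp]: "(\<lambda>a. - (p::talg) a) = - p" by (simp add: fun_eq_iff)
lemma lam_zero[simp]: "(\<lambda>a. 0) = (0::talg)" by (simp add: fun_eq_iff)

lemma tmul_add_left: "(p + q) \<otimes> r = p \<otimes> r + q \<otimes> r"
  by (simp add: tmul_def fun_eq_iff distrib_right sum.distrib)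
lemma tmul_add_right: "r \<otimes> (p + q) = r \<otimes> p + r \<otimes> q"
  by (simp add: tmul_def fun_eq_iff distrib_left sum.distrib)
lemma tmul_zero_left[simp]: "0 \<otimes> r = 0"
  by (simp add: tmul_def fun_eq_iff)
lemma tmul_zero_right[simp]: "r \<otimes> 0 = 0"
  by (simp add: tmul_def fun_eq_iff)
lemma tmul_zero_left'[simp]: "(\<lambda>a. 0) \<otimes> r = (\<lambda>a. 0)"
  by (simp add: tmul_def fun_eq_iff)
lemma tmul_zero_right'[simp]: "r \<otimes> (\<lambda>a. 0) = (\<lambda>a. 0)"
  by (simp add: tmul_def fun_eq_iff)
lemma tmul_uminus_left: "(- p) \<otimes> r = - (p \<otimes> r)"
  by (simp add: tmul_def fun_eq_iff sum_negf)
lemma tmul_uminus_right: "r \<otimes> (- p) = - (r \<otimes> p)"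
  by (simp add: tmul_def fun_eq_iff sum_negf)
lemma tmul_diff_left: "(p - q) \<otimes> r = p \<otimes> r - q \<otimes> r"
  by (simp add: tmul_def fun_eq_iff left_diff_distrib sum_subtractf)
lemma tmul_diff_right: "r \<otimes> (p - q) = r \<otimes> p - r \<otimes> q"
  by (simp add: tmul_def fun_eq_iff right_diff_distrib sum_subtractf)
lemma tmul_sum_left: "(\<Sum>i\<in>A. f i) \<otimes> r = (\<Sum>i\<in>A. f i \<otimes> r)"
proof (induct A rule: infinite_finite_induct)
  case (insert x B) then show ?case by (subst sum.insert[OF insert(1,2)])+ (simp only: tmul_add_left insert(3))
qed simp_all
lemma tmul_sum_right: "r \<otimes> (\<Sum>i\<in>A. f i) = (\<Sum>i\<in>A. r \<otimes> f i)"
proof (induct A rule: infinite_finite_induct)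
  case (insert x B) then show ?case by (subst sum.insert[OF insert(1,2)])+ (simp only: tmul_add_right insert(3))
qed simp_all
lemma tsc_left: "tsc c p \<otimes> q = tsc c (p \<otimes> q)"
  by (simp add: tmul_def tsc_def fun_eq_iff sum_distrib_left mult.assoc)
lemma tsc_right: "p \<otimes> tsc c q = tsc c (p \<otimes> q)"
  by (simp add: tmul_def tsc_def fun_eq_iff sum_distrib_left mult.left_commute)
lemma tsc_one[simp]: "tsc 1 p = p" by (simp add: tsc_def)
lemma tsc_mone[simp]: "tsc (-1) p = - p" by (simp add: tsc_def fun_eq_iff)
lemma tsc_zero[simp]: "tsc 0 p = 0" by (simp add: tsc_def fun_eq_iff)

lemma mono_tmul_apply: "(mono u \<otimes> q) w = (if take (length u) w = u then q (drop (length u) w) else 0)"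
proof -
  have "(mono u \<otimes> q) w = (\<Sum>k\<le>length w. if k = length u then (if take (length u) w = u then q (drop (length u) w) else 0) else 0)"
    unfolding tmul_def mono_def
    by (rule sum.cong) auto
  also have "\<dots> = (if take (length u) w = u then q (drop (length u) w) else 0)"
    by (auto simp: sum.delta)
  finally show ?thesis .
qed

lemma mono_nil_left[simp]: "mono [] \<otimes> q = q"
  by (simp add: fun_eq_iff mono_tmul_apply)

lemma mono_nil_right[simp]: "q \<otimes> mono [] = q"
proof -
  have "(q \<otimes> mono []) w = q w" for w
  proof -
    have "(q \<otimes> mono []) w = (\<Sum>k\<le>length w. if k = length w then q w else 0)"
      unfolding tmul_def mono_def by (rule sum.cong) auto
    then show ?thesis by simp
  qed
  then show ?thesis by auto
qed

lemma gen_mono: "gen x \<otimes> mono u = mono (x # u)"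
proof (rule ext)
  fix w show "(gen x \<otimes> mono u) w = mono (x # u) w"
    unfolding gen_def mono_tmul_apply by (cases w) (auto simp: mono_def)
qed

lemma gen_assoc: "gen x \<otimes> (p \<otimes> r) = (gen x \<otimes> p) \<otimes> r"
proof (rule ext)
  fix w
  show "(gen x \<otimes> (p \<otimes> r)) w = ((gen x \<otimes> p) \<otimes> r) w"
  proof (cases w)
    case Nil
    then show ?thesis by (simp add: gen_def tmul_def mono_def)
  next
    case (Cons y w')
    have "((gen x \<otimes> p) \<otimes> r) w = (\<Sum>k\<le>Suc (length w'). (gen x \<otimes> p) (take k (y#w')) * r (drop k (y#w')))"
      using Cons by (simp add: tmul_def)
    also have "\<dots> = (gen x \<otimes> p) [] * r (y#w') + (\<Sum>j\<le>length w'. (gen x \<otimes> p) (y # take j w') * r (drop j w'))"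
      by (subst sum.atMost_Suc_shift) simp
    also have "\<dots> = (\<Sum>j\<le>length w'. (if y = x then p (take j w') else 0) * r (drop j w'))"
      by (simp add: gen_def mono_tmul_apply cong: if_cong)
    also have "\<dots> = (gen x \<otimes> (p \<otimes> r)) w"
      using Cons unfolding gen_def mono_tmul_apply by (simp add: tmul_def)
    finally show ?thesis by simp
  qed
qed



inductive_set sp :: "nat \<Rightarrow> talg set" for n where
  sp_mono: "set u \<subseteq> qbasis n \<Longrightarrow> mono u \<in> sp n"
| sp_zero: "0 \<in> sp n"
| sp_add: "p \<in> sp n \<Longrightarrow> q \<in> sp n \<Longrightarrow> p + q \<in> sp n"
| sp_neg: "p \<in> sp n \<Longrightarrow> - p \<in> sp n"

lemma sp_zero'[simp]: "(\<lambda>a. 0) \<in> sp n"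
  using sp_zero[of n] by simp
lemma K_zero'[simp]: "(\<lambda>a. 0) \<in> kideal n"
  using kideal.zero[of n] by simp

lemma sp_diff: "p \<in> sp n \<Longrightarrow> q \<in> sp n \<Longrightarrow> p - q \<in> sp n"
  using sp_add[OF _ sp_neg, of p n q] by simp

lemma sp_sum: "(\<And>i. i \<in> A \<Longrightarrow> f i \<in> sp n) \<Longrightarrow> (\<Sum>i\<in>A. f i) \<in> sp n"
proof (induct A rule: infinite_finite_induct)
  case (infinite A) then show ?case by (simp add: sp_zero)
next
  case empty then show ?case by (simp add: sp_zero)
next
  case (insert x B) then show ?case by (subst sum.insert[OF insert(1,2)]) (auto intro: sp_add)
qed

lemma sp_gen: "x \<in> qbasis n \<Longrightarrow> gen x \<in> sp n"
  unfolding gen_def by (rule sp_mono) simp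

lemma sp_lmul: assumes "x \<in> qbasis n" "p \<in> sp n" shows "gen x \<otimes> p \<in> sp n"
  using assms(2)
proof induct
  case (sp_mono u) then show ?case using assms(1) by (simp add: gen_mono sp.sp_mono)
next
  case sp_zero then show ?case by (simp add: sp.sp_zero)
next
  case (sp_add p q) then show ?case by (simp add: tmul_add_right sp.sp_add)
next
  case (sp_neg p) then show ?case by (simp add: tmul_uminus_right sp.sp_neg)
qed

definition ng :: "bool \<Rightarrow> talg \<Rightarrow> talg" where "ng b p = (if b then - p else p)"
lemma ng_simps[simp]: "ng False p = p" "ng True p = - p" by (simp_all add: ng_def)

fun mk :: "bool \<Rightarrow> nat \<Rightarrow> nat \<Rightarrow> qgen" where
  "mk False i j = E i j" | "mk True i j = F i j"

lemma qbasis_mk[simp]: "mk t i j \<in> qbasis n \<longleftrightarrow> 1 \<le> i \<and> i \<le> n \<and> 1 \<le> j \<and> j \<le> n"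
  by (cases t) (auto simp: qbasis_def)

lemma mbasis_mk[simp]: "mk t i j \<in> mbasis n \<longleftrightarrow> 1 \<le> j \<and> j < i \<and> i \<le> n"
  by (cases t) (auto simp: mbasis_def)

lemma qbasis_EF[simp]: "E i j \<in> qbasis n \<longleftrightarrow> 1 \<le> i \<and> i \<le> n \<and> 1 \<le> j \<and> j \<le> n"
   "F i j \<in> qbasis n \<longleftrightarrow> 1 \<le> i \<and> i \<le> n \<and> 1 \<le> j \<and> j \<le> n"
  by (auto simp: qbasis_def)

lemma tsc_nsign: "tsc (- ((-1) ^ k)) p = ng (even k) p"
  by (cases "even k") (simp_all add: ng_def tsc_def fun_eq_iff)

lemma tsc_sign: "tsc ((-1) ^ k) p = ng (odd k) p"
  by (cases "even k") (simp_all add: ng_def)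

lemma ser_Suc: assumes "1 \<le> m"
  shows "ser n (Suc m) (mk t c d) = (\<Sum>k=1..n. gen (mk False c k) \<otimes> ser n m (mk t k d))
     + ng (odd m) (\<Sum>k=1..n. gen (mk True c k) \<otimes> ser n m (mk (\<not> t) k d))"
proof -
  obtain m' where m: "m = Suc m'" using assms by (cases m) auto
  show ?thesis unfolding m by (cases t) (simp_all add: tsc_sign tsc_nsign)
qed

lemma ser_one[simp]: "ser n (Suc 0) x = gen x" by simp

lemma ser_sp: "1 \<le> m \<Longrightarrow> mk t c d \<in> qbasis n \<Longrightarrow> ser n m (mk t c d) \<in> sp n"
proof (induct m arbitrary: t c rule: nat_induct_at_least)
  case base then show ?case by (simp add: sp_gen)
next
  case (Suc m)
  have A: "(\<Sum>k=1..n. gen (mk False c k) \<otimes> ser n m (mk t k d)) \<in> sp n"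
    using Suc by (intro sp_sum sp_lmul) auto
  have B: "(\<Sum>k=1..n. gen (mk True c k) \<otimes> ser n m (mk (\<not>t) k d)) \<in> sp n"
    using Suc by (intro sp_sum sp_lmul) auto
  show ?case unfolding ser_Suc[OF Suc(1)] using A B
    by (cases "odd m") (auto intro: sp_add sp_neg sp_diff)
qed

lemma K_neg: "p \<in> kideal n \<Longrightarrow> - p \<in> kideal n"
  using kideal.smul[of p n "-1"] by simp

lemma K_diff: "p \<in> kideal n \<Longrightarrow> q \<in> kideal n \<Longrightarrow> p - q \<in> kideal n"
  using kideal.add[OF _ K_neg, of p n q] by simp

lemma K_ng: "p \<in> kideal n \<Longrightarrow> ng b p \<in> kideal n"
  by (cases b) (simp_all add: K_neg)

lemma K_sum: "(\<And>i. i \<in> A \<Longrightarrow> f i \<in> kideal n) \<Longrightarrow> (\<Sum>i\<in>A. f i) \<in> kideal n"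
proof (induct A rule: infinite_finite_induct)
  case (infinite A) then show ?case by (simp add: kideal.zero)
next
  case empty then show ?case by (simp add: kideal.zero)
next
  case (insert x B) then show ?case by (subst sum.insert[OF insert(1,2)]) (auto intro: kideal.add)
qed

lemma K_lmul: assumes "x \<in> qbasis n" "p \<in> kideal n" shows "gen x \<otimes> p \<in> kideal n"
  using assms(2)
proof induct
  case zero then show ?case by (simp add: kideal.zero)
next
  case (rel a b u v)
  have "gen x \<otimes> (mono u \<otimes> qrel a b \<otimes> mono v) = mono (x # u) \<otimes> qrel a b \<otimes> mono v"
    by (simp add: gen_assoc gen_mono)
  then show ?case using rel assms(1) by (simp add: kideal.rel)
next
  case (lft a u)
  have "gen x \<otimes> (mono u \<otimes> (gen a - tsc (chi a) (mono []))) = mono (x # u) \<otimes> (gen a - tsc (chi a) (mono []))"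
    by (simp add: gen_assoc gen_mono)
  then show ?case using lft assms(1) by (simp add: kideal.lft)
next
  case (add p q) then show ?case by (simp add: tmul_add_right kideal.add)
next
  case (smul p c) then show ?case by (simp add: tsc_right kideal.smul)
qed

lemma K_rel: assumes "x \<in> qbasis n" "y \<in> qbasis n" "W \<in> sp n" shows "qrel x y \<otimes> W \<in> kideal n"
  using assms(3)
proof induct
  case (sp_mono v)
  have "qrel x y \<otimes> mono v = mono [] \<otimes> qrel x y \<otimes> mono v" by simp
  then show ?case using sp_mono assms by (simp add: kideal.rel del: mono_nil_left)
next
  case sp_zero then show ?case by (simp add: kideal.zero)
next
  case (sp_add p q) then show ?case by (simp add: tmul_add_right kideal.add)
next
  case (sp_neg p) then show ?case by (simp add: tmul_uminus_right K_neg)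
qed

lemma K_lft: assumes "a \<in> mbasis n" "W \<in> sp n" shows "W \<otimes> gen a - tsc (chi a) W \<in> kideal n"
  using assms(2)
proof induct
  case (sp_mono u)
  have eq: "mono u \<otimes> (gen a - tsc (chi a) (mono [])) = mono u \<otimes> gen a - tsc (chi a) (mono u)"
    by (simp add: tmul_diff_right tsc_right)
  show ?case unfolding eq[symmetric] by (rule kideal.lft[OF assms(1) sp_mono])
next
  case sp_zero then show ?case by (simp add: kideal.zero tsc_def)
next
  case (sp_add p q)
  have eq: "(p + q) \<otimes> gen a - tsc (chi a) (p + q) = (p \<otimes> gen a - tsc (chi a) p) + (q \<otimes> gen a - tsc (chi a) q)"
    by (simp add: tmul_add_left tsc_def fun_eq_iff algebra_simps)
  show ?case unfolding eq by (rule kideal.add[OF sp_add(2) sp_add(4)])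
next
  case (sp_neg p)
  have eq: "(- p) \<otimes> gen a - tsc (chi a) (- p) = - (p \<otimes> gen a - tsc (chi a) p)"
    by (simp add: tmul_uminus_left tsc_def fun_eq_iff algebra_simps)
  show ?case unfolding eq by (rule K_neg) (rule sp_neg(2))
qed

lemma pe_refl[simp]: "pi_eq n p p" by (simp add: pi_eq_def kideal.zero)
lemma pe_eq: "p = q \<Longrightarrow> pi_eq n p q" by simp
lemma pe_sym: "pi_eq n p q \<Longrightarrow> pi_eq n q p"
  unfolding pi_eq_def using K_neg by fastforce
lemma pe_trans: "pi_eq n p q \<Longrightarrow> pi_eq n q r \<Longrightarrow> pi_eq n p r"
  unfolding pi_eq_def using kideal.add by fastforce
lemma pe_add: "pi_eq n p q \<Longrightarrow> pi_eq n p' q' \<Longrightarrow> pi_eq n (p + p') (q + q')"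
  unfolding pi_eq_def using kideal.add by (fastforce simp: algebra_simps)
lemma pe_neg: "pi_eq n p q \<Longrightarrow> pi_eq n (- p) (- q)"
  unfolding pi_eq_def using K_neg by fastforce
lemma pe_ng: "pi_eq n p q \<Longrightarrow> pi_eq n (ng b p) (ng b q)"
  by (cases b) (simp_all add: pe_neg)
lemma pe_lmul: "x \<in> qbasis n \<Longrightarrow> pi_eq n p q \<Longrightarrow> pi_eq n (gen x \<otimes> p) (gen x \<otimes> q)"
  unfolding pi_eq_def using K_lmul by (fastforce simp: tmul_diff_right)
lemma pe_sum: "(\<And>i. i \<in> A \<Longrightarrow> pi_eq n (f i) (g i)) \<Longrightarrow> pi_eq n (\<Sum>i\<in>A. f i) (\<Sum>i\<in>A. g i)"
  unfolding pi_eq_def using K_sum[of A "\<lambda>i. f i - g i" n] by (simp add: sum_subtractf)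



lemma tmul_ng_left: "ng b p \<otimes> q = ng b (p \<otimes> q)"
  by (cases b) (simp_all add: tmul_uminus_left)
lemma tmul_ng_right: "q \<otimes> ng b p = ng b (q \<otimes> p)"
  by (cases b) (simp_all add: tmul_uminus_right)
lemma tmul_if_left: "(if P then p else q) \<otimes> r = (if P then p \<otimes> r else q \<otimes> r)" by simp
lemma tmul_if_right: "r \<otimes> (if P then p else q) = (if P then r \<otimes> p else r \<otimes> q)" by simp

lemma qrel_mk: "gen (mk u a b) \<otimes> gen (mk v c k) = qrel (mk u a b) (mk v c k)
   + ng (u \<and> v) (gen (mk v c k) \<otimes> gen (mk u a b))
   + (if b = c then gen (mk (u \<noteq> v) a k) else 0)
   + (if k = a then ng (\<not> (u \<and> v)) (gen (mk (u \<noteq> v) c b)) else 0)"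
  by (cases u; cases v) (simp_all add: qrel_def)

definition COMM :: "nat \<Rightarrow> nat \<Rightarrow> bool" where
  "COMM n m \<longleftrightarrow> (\<forall>u t a b c d. 1 \<le> a \<and> a \<le> n \<and> 1 \<le> b \<and> b \<le> n \<and> 1 \<le> c \<and> c \<le> n \<and> 1 \<le> d \<and> d \<le> n \<and> a \<noteq> d \<longrightarrow>
     pi_eq n (gen (mk u a b) \<otimes> ser n m (mk t c d))
       (ng (u \<and> t) (ser n m (mk t c d) \<otimes> gen (mk u a b))
        + (if b = c then ng (u \<and> even m) (ser n m (mk (u \<noteq> t) a d)) else 0)))"

lemma COMM_D:
  assumes "COMM n m" "1 \<le> a" "a \<le> n" "1 \<le> b" "b \<le> n" "1 \<le> c" "c \<le> n" "1 \<le> d" "d \<le> n" "a \<noteq> d"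
  shows "pi_eq n (gen (mk u a b) \<otimes> ser n m (mk t c d))
       (ng (u \<and> t) (ser n m (mk t c d) \<otimes> gen (mk u a b))
        + (if b = c then ng (u \<and> even m) (ser n m (mk (u \<noteq> t) a d)) else 0))"
proof -
  have "1 \<le> a \<and> a \<le> n \<and> 1 \<le> b \<and> b \<le> n \<and> 1 \<le> c \<and> c \<le> n \<and> 1 \<le> d \<and> d \<le> n \<and> a \<noteq> d \<longrightarrow>
     pi_eq n (gen (mk u a b) \<otimes> ser n m (mk t c d))
       (ng (u \<and> t) (ser n m (mk t c d) \<otimes> gen (mk u a b))
        + (if b = c then ng (u \<and> even m) (ser n m (mk (u \<noteq> t) a d)) else 0))"
    using assms(1) unfolding COMM_def by blast
  then show ?thesis using assms(2-) by blast
qed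

lemma comm_word:
  assumes C: "COMM n m" and m: "1 \<le> m"
    and r: "1 \<le> a" "a \<le> n" "1 \<le> b" "b \<le> n" "1 \<le> c" "c \<le> n" "1 \<le> k" "k \<le> n" "1 \<le> d" "d \<le> n"
    and ad: "a \<noteq> d"
  shows "pi_eq n (gen (mk u a b) \<otimes> (gen (mk v c k) \<otimes> ser n m (mk t k d)))
    (ng (u \<and> v) (ng (u \<and> t) ((gen (mk v c k) \<otimes> ser n m (mk t k d)) \<otimes> gen (mk u a b)))
    + (if b = k then ng (u \<and> v) (ng (u \<and> even m) (gen (mk v c k) \<otimes> ser n m (mk (u \<noteq> t) a d))) else 0)
    + (if b = c then gen (mk (u \<noteq> v) a k) \<otimes> ser n m (mk t k d) else 0)
    + (if k = a then ng (\<not> (u \<and> v)) (gen (mk (u \<noteq> v) c b) \<otimes> ser n m (mk t k d)) else 0))"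
proof -
  define X where "X = gen (mk u a b)"
  define G where "G = gen (mk v c k)"
  define W where "W = ser n m (mk t k d)"
  define R where "R = ng (u \<and> t) (W \<otimes> X) + (if b = k then ng (u \<and> even m) (ser n m (mk (u \<noteq> t) a d)) else 0)"
  have XW: "X \<otimes> W - R \<in> kideal n"
    using COMM_D[OF C r(1-4) r(7-10) ad] unfolding pi_eq_def X_def W_def R_def by simp
  have WS: "W \<in> sp n" unfolding W_def using m r by (intro ser_sp) auto
  have K1: "qrel (mk u a b) (mk v c k) \<otimes> W \<in> kideal n"
    using r WS by (intro K_rel) auto
  have K2: "ng (u \<and> v) (G \<otimes> (X \<otimes> W - R)) \<in> kideal n"
    unfolding G_def using r XW by (intro K_ng K_lmul) auto
  define S where "S = ser n m (mk (u \<noteq> t) a d)"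
  have eq1: "X \<otimes> (G \<otimes> W) = qrel (mk u a b) (mk v c k) \<otimes> W + ng (u \<and> v) (G \<otimes> (X \<otimes> W))
     + (if b = c then gen (mk (u \<noteq> v) a k) \<otimes> W else 0)
     + (if k = a then ng (\<not> (u \<and> v)) (gen (mk (u \<noteq> v) c b) \<otimes> W) else 0)"
    unfolding X_def G_def
    unfolding gen_assoc qrel_mk[of u a b v c k]
    by (simp only: gen_assoc tmul_add_left tmul_ng_left tmul_if_left tmul_zero_left)
  have eq2: "G \<otimes> (X \<otimes> W) = G \<otimes> (X \<otimes> W - R) + ng (u \<and> t) ((G \<otimes> W) \<otimes> X)
     + (if b = k then ng (u \<and> even m) (G \<otimes> S) else 0)"
    unfolding R_def S_def G_def
    by (simp only: tmul_diff_right tmul_add_right tmul_ng_right tmul_if_right tmul_zero_right gen_assoc diff_add_cancel add.assoc)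
  have ng_add: "\<And>b p q. ng b (p + q) = ng b p + ng b q" by (simp add: ng_def)
  have ng_if: "\<And>b P p. ng b (if P then p else 0) = (if P then ng b p else 0)" by (simp add: ng_def)
  have eq: "X \<otimes> (G \<otimes> W) - (ng (u \<and> v) (ng (u \<and> t) ((G \<otimes> W) \<otimes> X))
    + (if b = k then ng (u \<and> v) (ng (u \<and> even m) (G \<otimes> S)) else 0)
    + (if b = c then gen (mk (u \<noteq> v) a k) \<otimes> W else 0)
    + (if k = a then ng (\<not> (u \<and> v)) (gen (mk (u \<noteq> v) c b) \<otimes> W) else 0))
    = qrel (mk u a b) (mk v c k) \<otimes> W + ng (u \<and> v) (G \<otimes> (X \<otimes> W - R))"
    unfolding eq1 eq2 ng_add ng_if by (simp add: algebra_simps)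
  show ?thesis unfolding pi_eq_def using kideal.add[OF K1 K2]
    unfolding eq[symmetric] unfolding X_def G_def W_def S_def .
qed



lemma ng_sum: "(\<Sum>k\<in>S. ng b (f k)) = ng b (\<Sum>k\<in>S. f k)"
  by (cases b) (simp_all add: sum_negf)
lemma ng_add: "ng b (p + q) = ng b p + ng b q" by (simp add: ng_def)
lemma ng_ng: "ng b (ng c p) = ng (b \<noteq> c) p" by (simp add: ng_def)
lemma sum_if_const: "(\<Sum>k\<in>S. if P then f k else 0) = (if P then (\<Sum>k\<in>S. f k) else 0)" by simp

lemma COMM_one: "COMM n (Suc 0)"
  unfolding COMM_def
proof (intro allI impI)
  fix u t a b c d assume h: "1 \<le> a \<and> a \<le> n \<and> 1 \<le> b \<and> b \<le> n \<and> 1 \<le> c \<and> c \<le> n \<and> 1 \<le> d \<and> d \<le> n \<and> a \<noteq> d"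
  have K: "qrel (mk u a b) (mk t c d) \<otimes> mono [] \<in> kideal n"
    using h by (intro K_rel sp_mono) auto
  have "gen (mk u a b) \<otimes> gen (mk t c d) - (ng (u \<and> t) (gen (mk t c d) \<otimes> gen (mk u a b))
        + (if b = c then ng (u \<and> even (Suc 0)) (gen (mk (u \<noteq> t) a d)) else 0))
      = qrel (mk u a b) (mk t c d) \<otimes> mono []"
    unfolding qrel_mk[of u a b t c d] using h by simp
  then show "pi_eq n (gen (mk u a b) \<otimes> ser n (Suc 0) (mk t c d))
       (ng (u \<and> t) (ser n (Suc 0) (mk t c d) \<otimes> gen (mk u a b))
        + (if b = c then ng (u \<and> even (Suc 0)) (ser n (Suc 0) (mk (u \<noteq> t) a d)) else 0))"
    unfolding pi_eq_def ser_one using K by simp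
qed

lemma COMM_step:
  assumes C: "COMM n m" and m: "1 \<le> m"
  shows "COMM n (Suc m)"
  unfolding COMM_def
proof (intro allI impI)
  fix u t a b c d assume h: "1 \<le> a \<and> a \<le> n \<and> 1 \<le> b \<and> b \<le> n \<and> 1 \<le> c \<and> c \<le> n \<and> 1 \<le> d \<and> d \<le> n \<and> a \<noteq> d"
  define X where "X = gen (mk u a b)"
  define Z where "Z = (\<lambda>k. ser n m (mk t k d))"
  define Z' where "Z' = (\<lambda>k. ser n m (mk (\<not> t) k d))"
  define A where "A = (\<Sum>k=1..n. gen (mk False c k) \<otimes> Z k)"
  define B where "B = (\<Sum>k=1..n. gen (mk True c k) \<otimes> Z' k)"
  define RA where "RA = (\<lambda>k. ng (u \<and> False) (ng (u \<and> t) ((gen (mk False c k) \<otimes> Z k) \<otimes> X))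
    + (if b = k then ng (u \<and> False) (ng (u \<and> even m) (gen (mk False c k) \<otimes> ser n m (mk (u \<noteq> t) a d))) else 0)
    + (if b = c then gen (mk (u \<noteq> False) a k) \<otimes> Z k else 0)
    + (if k = a then ng (\<not> (u \<and> False)) (gen (mk (u \<noteq> False) c b) \<otimes> Z k) else 0))"
  define RB where "RB = (\<lambda>k. ng (u \<and> True) (ng (u \<and> \<not> t) ((gen (mk True c k) \<otimes> Z' k) \<otimes> X))
    + (if b = k then ng (u \<and> True) (ng (u \<and> even m) (gen (mk True c k) \<otimes> ser n m (mk (u \<noteq> (\<not> t)) a d))) else 0)
    + (if b = c then gen (mk (u \<noteq> True) a k) \<otimes> Z' k else 0)
    + (if k = a then ng (\<not> (u \<and> True)) (gen (mk (u \<noteq> True) c b) \<otimes> Z' k) else 0))"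
  have Y: "ser n (Suc m) (mk t c d) = A + ng (odd m) B"
    unfolding A_def B_def Z_def Z'_def by (rule ser_Suc[OF m])
  have PA: "pi_eq n (X \<otimes> A) (\<Sum>k=1..n. RA k)"
    unfolding A_def tmul_sum_right
    apply (rule pe_sum)
    subgoal for k unfolding X_def Z_def RA_def apply (rule comm_word[OF C m]) using h by auto
    done
  have PB: "pi_eq n (X \<otimes> B) (\<Sum>k=1..n. RB k)"
    unfolding B_def tmul_sum_right
    apply (rule pe_sum)
    subgoal for k unfolding X_def Z'_def RB_def apply (rule comm_word[OF C m]) using h by auto
    done
  have SA: "(\<Sum>k=1..n. RA k) = ng (u \<and> t) (A \<otimes> X)
     + ng (u \<and> even m) (gen (mk False c b) \<otimes> ser n m (mk (u \<noteq> t) a d))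
     + (if b = c then (\<Sum>k=1..n. gen (mk u a k) \<otimes> Z k) else 0)
     - gen (mk u c b) \<otimes> Z a"
    unfolding RA_def A_def using h
    by (simp add: sum.distrib ng_sum tmul_sum_left sum_if_const)
  have SB: "(\<Sum>k=1..n. RB k) = ng u (ng (u \<and> \<not> t) (B \<otimes> X))
     + ng u (ng (u \<and> even m) (gen (mk True c b) \<otimes> ser n m (mk (u = t) a d)))
     + (if b = c then (\<Sum>k=1..n. gen (mk (\<not> u) a k) \<otimes> Z' k) else 0)
     + ng (\<not> u) (gen (mk (\<not> u) c b) \<otimes> Z' a)"
    unfolding RB_def B_def using h
    by (simp add: sum.distrib ng_sum tmul_sum_left sum_if_const)
  have YS: "ser n (Suc m) (mk (u \<noteq> t) a d) = (\<Sum>k=1..n. gen (mk False a k) \<otimes> ser n m (mk (u \<noteq> t) k d))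
     + ng (odd m) (\<Sum>k=1..n. gen (mk True a k) \<otimes> ser n m (mk (u = t) k d))"
    using ser_Suc[OF m, of n "u \<noteq> t" a d] by simp
  have fin: "(\<Sum>k=1..n. RA k) + ng (odd m) (\<Sum>k=1..n. RB k) =
    ng (u \<and> t) (ser n (Suc m) (mk t c d) \<otimes> X)
     + (if b = c then ng (u \<and> even (Suc m)) (ser n (Suc m) (mk (u \<noteq> t) a d)) else 0)"
    unfolding SA SB Y YS Z_def Z'_def
    by (cases u; cases t; cases "even m") (simp_all add: tmul_add_left tmul_diff_left tmul_uminus_left algebra_simps)
  show "pi_eq n (gen (mk u a b) \<otimes> ser n (Suc m) (mk t c d))
       (ng (u \<and> t) (ser n (Suc m) (mk t c d) \<otimes> gen (mk u a b))
        + (if b = c then ng (u \<and> even (Suc m)) (ser n (Suc m) (mk (u \<noteq> t) a d)) else 0))"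
    using pe_add[OF PA pe_ng[OF PB, of "odd m"]] fin
    unfolding X_def[symmetric] Y tmul_add_right tmul_ng_right by simp
qed

lemma COMM_all: "1 \<le> m \<Longrightarrow> COMM n m"
  by (induct m rule: nat_induct_at_least) (auto intro: COMM_one COMM_step)



definition val :: "bool \<Rightarrow> nat \<Rightarrow> nat \<Rightarrow> talg" where
 "val t m i = (if t then (if i = m then (\<Sum>j=1..m. ng (even j) (gen (F j j))) else 0)
   else (if i = m then (\<Sum>j=1..m. gen (E j j)) else if i = m + 1 then mono [] else 0))"

lemma chi_mk: "chi (mk t i k) = (if \<not> t \<and> i = k + 1 then 1 else 0)"
  by (cases t) auto

lemma pe_lft: assumes "1 \<le> k" "k < i" "i \<le> n" "W \<in> sp n"
  shows "pi_eq n (W \<otimes> gen (mk t i k)) (if \<not> t \<and> i = k + 1 then W else 0)"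
  using K_lft[of "mk t i k" n W] assms unfolding pi_eq_def chi_mk by auto

lemma base_case: assumes "1 \<le> i" "i \<le> n" shows "pi_eq n (ser n (Suc 0) (mk t i 1)) (val t (Suc 0) i)"
proof (cases "i = 1")
  case True then show ?thesis by (cases t) (simp_all add: val_def)
next
  case False
  then have "pi_eq n (mono [] \<otimes> gen (mk t i 1)) (if \<not> t \<and> i = 1 + 1 then mono [] else 0)"
    using assms by (intro pe_lft sp_mono) auto
  then show ?thesis using False by (cases t) (auto simp: val_def)
qed

lemma small_k:
  assumes m: "1 \<le> m" and k: "1 \<le> k" "k < i" and i: "i \<le> n"
  shows "pi_eq n (gen (mk False i k) \<otimes> ser n m (mk t k 1) + ng (odd m) (gen (mk True i k) \<otimes> ser n m (mk (\<not> t) k 1)))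
     (if i = k + 1 then ser n m (mk t k 1) else 0)"
proof -
  have C: "COMM n m" using COMM_all[OF m] .
  define S where "S = ser n m (mk t i 1)"
  have c1: "pi_eq n (gen (mk False i k) \<otimes> ser n m (mk t k 1)) (ser n m (mk t k 1) \<otimes> gen (mk False i k) + S)"
    using COMM_D[OF C, of i k k 1 False t] k i unfolding S_def by simp
  have l1: "pi_eq n (ser n m (mk t k 1) \<otimes> gen (mk False i k)) (if i = k + 1 then ser n m (mk t k 1) else 0)"
    using pe_lft[of k i n "ser n m (mk t k 1)" False] k i m by (simp add: ser_sp)
  have c2: "pi_eq n (gen (mk True i k) \<otimes> ser n m (mk (\<not> t) k 1)) (ng (\<not> t) (ser n m (mk (\<not> t) k 1) \<otimes> gen (mk True i k)) + ng (even m) S)"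
    using COMM_D[OF C, of i k k 1 True "\<not> t"] k i unfolding S_def by simp
  have l2: "pi_eq n (ser n m (mk (\<not> t) k 1) \<otimes> gen (mk True i k)) 0"
    using pe_lft[of k i n "ser n m (mk (\<not> t) k 1)" True] k i m by (simp add: ser_sp)
  have P1: "pi_eq n (gen (mk False i k) \<otimes> ser n m (mk t k 1)) ((if i = k + 1 then ser n m (mk t k 1) else 0) + S)"
    using pe_trans[OF c1 pe_add[OF l1 pe_refl]] .
  have P2: "pi_eq n (gen (mk True i k) \<otimes> ser n m (mk (\<not> t) k 1)) (ng (even m) S)"
    using pe_trans[OF c2 pe_add[OF pe_ng[OF l2] pe_refl]] by (cases t) simp_all
  have "pi_eq n (gen (mk False i k) \<otimes> ser n m (mk t k 1) + ng (odd m) (gen (mk True i k) \<otimes> ser n m (mk (\<not> t) k 1)))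
     ((if i = k + 1 then ser n m (mk t k 1) else 0) + S + ng (odd m) (ng (even m) S))"
    using pe_add[OF P1 pe_ng[OF P2]] .
  then show ?thesis by (cases "even m") simp_all
qed



lemma ng_zero[simp]: "ng b 0 = 0" by (simp add: ng_def)

lemma val_big: "m < k \<Longrightarrow> val t m k = (if \<not> t \<and> k = m + 1 then mono [] else 0)"
  by (auto simp: val_def)

lemma main_step:
  assumes m: "1 \<le> m" and mn: "Suc m \<le> n"
    and IH: "\<And>t i. m \<le> i \<Longrightarrow> i \<le> n \<Longrightarrow> pi_eq n (ser n m (mk t i 1)) (val t m i)"
    and i: "Suc m \<le> i" "i \<le> n"
  shows "pi_eq n (ser n (Suc m) (mk t i 1)) (val t (Suc m) i)"
proof -
  define T where "T = (\<lambda>k. gen (mk False i k) \<otimes> ser n m (mk t k 1) + ng (odd m) (gen (mk True i k) \<otimes> ser n m (mk (\<not> t) k 1)))"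
  have split: "{1..n} = {1..<i} \<union> {i..n}" using i by auto
  have eq0: "ser n (Suc m) (mk t i 1) = (\<Sum>k\<in>{1..<i}. T k) + (\<Sum>k\<in>{i..n}. T k)"
  proof -
    have "ser n (Suc m) (mk t i 1) = (\<Sum>k\<in>{1..n}. T k)"
      unfolding ser_Suc[OF m] T_def sum.distrib ng_sum ..
    also have "\<dots> = (\<Sum>k\<in>{1..<i}. T k) + (\<Sum>k\<in>{i..n}. T k)"
      unfolding split by (rule sum.union_disjoint) auto
    finally show ?thesis .
  qed
  have PL: "pi_eq n (\<Sum>k\<in>{1..<i}. T k) (\<Sum>k\<in>{1..<i}. if i = k + 1 then ser n m (mk t k 1) else 0)"
    unfolding T_def using i m by (intro pe_sum small_k) auto
  have "(\<Sum>k\<in>{1..<i}. if i = k + 1 then ser n m (mk t k 1) else 0) = (\<Sum>k\<in>{1..<i}. if k = i - 1 then ser n m (mk t k 1) else 0)"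
    using i by (intro sum.cong) auto
  also have "\<dots> = ser n m (mk t (i - 1) 1)" using i m by (subst sum.delta) auto
  finally have PL2: "pi_eq n (\<Sum>k\<in>{1..<i}. T k) (val t m (i - 1))"
    using pe_trans[OF PL] IH[of "i - 1" t] i by auto
  have PR: "pi_eq n (\<Sum>k\<in>{i..n}. T k) (\<Sum>k\<in>{i..n}. gen (mk False i k) \<otimes> val t m k + ng (odd m) (gen (mk True i k) \<otimes> val (\<not> t) m k))"
    unfolding T_def
  proof (rule pe_sum)
    fix k assume k: "k \<in> {i..n}"
    show "pi_eq n (gen (mk False i k) \<otimes> ser n m (mk t k 1) + ng (odd m) (gen (mk True i k) \<otimes> ser n m (mk (\<not> t) k 1)))
      (gen (mk False i k) \<otimes> val t m k + ng (odd m) (gen (mk True i k) \<otimes> val (\<not> t) m k))"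
      using k i m by (intro pe_add pe_ng pe_lmul IH) auto
  qed
  have "(\<Sum>k\<in>{i..n}. gen (mk False i k) \<otimes> val t m k + ng (odd m) (gen (mk True i k) \<otimes> val (\<not> t) m k))
      = (\<Sum>k\<in>{i..n}. if k = m + 1 then (if t then ng (odd m) (gen (F i k)) else gen (E i k)) else 0)"
    using i by (intro sum.cong) (auto simp: val_big)
  also have "\<dots> = (if i = m + 1 then (if t then ng (odd m) (gen (F i i)) else gen (E i i)) else 0)"
    using i mn by (auto simp: sum.delta')
  finally have PR2: "pi_eq n (\<Sum>k\<in>{i..n}. T k) (if i = m + 1 then (if t then ng (odd m) (gen (F i i)) else gen (E i i)) else 0)"
    using PR by simp
  have fin: "val t m (i - 1) + (if i = m + 1 then (if t then ng (odd m) (gen (F i i)) else gen (E i i)) else 0) = val t (Suc m) i"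
    using i by (cases t) (auto simp: val_def)
  show ?thesis unfolding eq0 using pe_add[OF PL2 PR2] fin by simp
qed

lemma main: "1 \<le> m \<Longrightarrow> m \<le> n \<Longrightarrow> (\<forall>t i. m \<le> i \<and> i \<le> n \<longrightarrow> pi_eq n (ser n m (mk t i 1)) (val t m i))"
proof (induct m rule: nat_induct_at_least)
  case base show ?case
  proof (intro allI impI)
    fix t i assume "1 \<le> i \<and> i \<le> n"
    then show "pi_eq n (ser n 1 (mk t i 1)) (val t 1 i)" using base_case[of i n t] by simp
  qed
next
  case (Suc m) then show ?case using main_step[of m n] by auto
qed

theorem lemma4p6:
  fixes n :: nat
  assumes "1 \<le> n"
  shows "pi_eq n (ser n n (E n 1)) (zel n) \<and> pi_eq n (ser n n (F n 1)) (H0 n)"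
proof -
  have h: "\<And>t. pi_eq n (ser n n (mk t n 1)) (val t n n)" using main[OF assms order.refl] by auto
  have 1: "val False n n = zel n" by (simp add: val_def zel_def)
  have 2: "val True n n = H0 n" unfolding val_def H0_def
    by (simp, rule sum.cong) (auto simp: tsc_sign)
  show ?thesis using h[of False] h[of True] 1 2 by simp
qed


end
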